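(* Let $q \geqslant 2$ and let $\alpha_1, \ldots, \alpha_q$ be arbitrary complex numbers. Then for every integer $r$ with $1 \leqslant r < q$, $$\sum_{s=1}^q 2^{q-s}(-1)^{s-1} \sum_{1 \leqslant k_1 < \cdots < k_s \leqslant q}\ \sum_{\substack{\varepsilon_i \in \{-1,+1\}\\ 2 \leqslant i \leqslant s}} \big(\alpha_{k_1} + \varepsilon_2 \alpha_{k_2} + \cdots + \varepsilon_s \alpha_{k_s}\big)^{2r} = 0.$$
   Context: For $s=1$ the inner sum over signs is empty of variables and consists of the single term $\alpha_{k_1}^{2r}$. *)

theory Defs
  imports "HOL-Analysis.Analysis"
begin

end

theory Submission
  imports Defs "HOL-Computational_Algebra.Polynomial"
begin

definition Dop :: "complex \<Rightarrow> complex poly \<Rightarrow> complex poly" where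
  "Dop a p = p \<circ>\<^sub>p [:a, 1:] - p"

definition Sop :: "complex \<Rightarrow> complex poly \<Rightarrow> complex poly" where
  "Sop a p = smult 2 p - p \<circ>\<^sub>p [:a, 1:] - p \<circ>\<^sub>p [:-a, 1:]"

lemma poly_Sop: "poly (Sop a p) t = 2 * poly p t - poly p (t + a) - poly p (t - a)"
  by (simp add: Sop_def poly_pcompose algebra_simps)

lemma Dop_deg0: "degree p = 0 \<Longrightarrow> Dop a p = 0"
  by (auto simp: Dop_def elim!: degree_eq_zeroE)

lemma Dop_deg: "degree (Dop a p) \<le> degree p - 1"
proof (cases "degree p = 0")
  case True then show ?thesis by (simp add: Dop_deg0)
next
  case False
  let ?n = "degree p"
  have d: "degree (p \<circ>\<^sub>p [:a, 1:]) = ?n" by (simp add: degree_pcompose)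
  have l: "coeff (p \<circ>\<^sub>p [:a, 1:]) ?n = coeff p ?n"
    using lead_coeff_comp[of "[:a, 1:]" p] d by simp
  have le: "degree (Dop a p) \<le> ?n" unfolding Dop_def
    using degree_diff_le[of "p \<circ>\<^sub>p [:a, 1:]" ?n p] d by simp
  show ?thesis
  proof (rule degree_le, intro allI impI)
    fix i assume "i > ?n - 1"
    then have "i = ?n \<or> i > ?n" using False by linarith
    then show "coeff (Dop a p) i = 0"
    proof
      assume "i = ?n" then show ?thesis using l by (simp add: Dop_def)
    next
      assume "i > ?n" then show ?thesis using le by (simp add: coeff_eq_0)
    qed
  qed
qed

lemma Sop_eq: "Sop a p = - (Dop a (Dop a p) \<circ>\<^sub>p [:-a, 1:])"
  by (rule poly_eq_poly_eq_iff[THEN iffD1]) (auto simp: Sop_def Dop_def poly_pcompose algebra_simps fun_eq_iff)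

lemma Sop_deg: "degree (Sop a p) \<le> degree p - 2"
proof -
  have "degree (Sop a p) = degree (Dop a (Dop a p))"
    by (simp add: Sop_eq degree_pcompose)
  also have "\<dots> \<le> degree (Dop a p) - 1" by (rule Dop_deg)
  also have "\<dots> \<le> degree p - 2" using Dop_deg[of a p] by linarith
  finally show ?thesis .
qed

lemma Sop_zero: "degree p < 2 \<Longrightarrow> Sop a p = 0"
proof -
  assume "degree p < 2"
  then have "degree (Dop a p) = 0" using Dop_deg[of a p] by linarith
  then show ?thesis by (simp add: Sop_eq Dop_deg0)
qed

lemma sum_PiE_insert:
  assumes "finite K" "i \<notin> K"
  shows "(\<Sum>\<epsilon>\<in>insert i K \<rightarrow>\<^sub>E {-1, 1::complex}. g \<epsilon>) =
         (\<Sum>\<epsilon>\<in>K \<rightarrow>\<^sub>E {-1, 1::complex}. g (\<epsilon>(i := 1)) + g (\<epsilon>(i := -1)))"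
proof -
  have "(\<Sum>\<epsilon>\<in>insert i K \<rightarrow>\<^sub>E {-1, 1::complex}. g \<epsilon>) =
        (\<Sum>(y, e)\<in>{-1, 1::complex} \<times> (K \<rightarrow>\<^sub>E {-1, 1::complex}). g (e(i := y)))"
    unfolding PiE_insert_eq
    by (subst sum.reindex) (auto intro!: inj_combinator[of i K "\<lambda>_. {-1, 1::complex}", simplified] assms simp: case_prod_beta)
  also have "\<dots> = (\<Sum>y\<in>{-1, 1::complex}. \<Sum>e\<in>K \<rightarrow>\<^sub>E {-1, 1::complex}. g (e(i := y)))"
    by (subst sum.cartesian_product) simp
  also have "\<dots> = (\<Sum>\<epsilon>\<in>K \<rightarrow>\<^sub>E {-1, 1::complex}. g (\<epsilon>(i := 1)) + g (\<epsilon>(i := -1)))"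
    by (simp add: sum.distrib add.commute)
  finally show ?thesis .
qed

definition Phi :: "nat set \<Rightarrow> (nat \<Rightarrow> complex) \<Rightarrow> (complex \<Rightarrow> complex) \<Rightarrow> complex \<Rightarrow> complex" where
  "Phi I x f t = (\<Sum>K\<in>Pow I. (-1) ^ card K * 2 ^ card (I - K) *
      (\<Sum>\<epsilon>\<in>K \<rightarrow>\<^sub>E {-1, 1::complex}. f (t + (\<Sum>k\<in>K. \<epsilon> k * x k))))"

lemma Phi_insert:
  assumes I: "finite I" "i \<notin> I"
  shows "Phi (insert i I) x f t = Phi I x (\<lambda>s. 2 * f s - f (s + x i) - f (s - x i)) t"
proof -
  have disj: "Pow I \<inter> insert i ` Pow I = {}" using I by auto
  have inj: "inj_on (insert i) (Pow I)" using I unfolding inj_on_def by (intro ballI impI) (metis PowD insert_ident subsetD)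
  have eq: "(-1) ^ card K * 2 ^ card (insert i I - K) *
      (\<Sum>\<epsilon>\<in>K \<rightarrow>\<^sub>E {-1, 1::complex}. f (t + (\<Sum>k\<in>K. \<epsilon> k * x k)))
    + (-1) ^ card (insert i K) * 2 ^ card (insert i I - insert i K) *
      (\<Sum>\<epsilon>\<in>insert i K \<rightarrow>\<^sub>E {-1, 1::complex}. f (t + (\<Sum>k\<in>insert i K. \<epsilon> k * x k)))
    = (-1) ^ card K * 2 ^ card (I - K) *
      (\<Sum>\<epsilon>\<in>K \<rightarrow>\<^sub>E {-1, 1::complex}. (\<lambda>s. 2 * f s - f (s + x i) - f (s - x i)) (t + (\<Sum>k\<in>K. \<epsilon> k * x k)))"
    if K: "K \<in> Pow I" for K
  proof -
    have fK: "finite K" "i \<notin> K" using K I finite_subset by auto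
    have c1: "card (insert i I - K) = Suc (card (I - K))"
      using fK I K by (simp add: Diff_insert_absorb insert_Diff_if)
    have c2: "insert i I - insert i K = I - K" using fK I by auto
    have s: "(\<Sum>k\<in>K. (\<epsilon>(i := y)) k * x k) = (\<Sum>k\<in>K. \<epsilon> k * x k)" for \<epsilon> :: "nat \<Rightarrow> complex" and y
      using fK by (intro sum.cong) auto
    define A where "A = (\<Sum>\<epsilon>\<in>K \<rightarrow>\<^sub>E {-1, 1::complex}. f (t + (\<Sum>k\<in>K. \<epsilon> k * x k)))"
    define Bp where "Bp = (\<Sum>\<epsilon>\<in>K \<rightarrow>\<^sub>E {-1, 1::complex}. f (t + (\<Sum>k\<in>K. \<epsilon> k * x k) + x i))"
    define Bm where "Bm = (\<Sum>\<epsilon>\<in>K \<rightarrow>\<^sub>E {-1, 1::complex}. f (t + (\<Sum>k\<in>K. \<epsilon> k * x k) - x i))"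
    have h2: "(\<Sum>\<epsilon>\<in>insert i K \<rightarrow>\<^sub>E {-1, 1::complex}. f (t + (\<Sum>k\<in>insert i K. \<epsilon> k * x k))) = Bp + Bm"
    proof -
      have s': "(\<Sum>k\<in>insert i K. (\<epsilon>(i := y)) k * x k) = y * x i + (\<Sum>k\<in>K. \<epsilon> k * x k)" for \<epsilon> :: "nat \<Rightarrow> complex" and y
        using fK s[of \<epsilon> y] by (simp add: sum.insert)
      have "(\<Sum>\<epsilon>\<in>insert i K \<rightarrow>\<^sub>E {-1, 1::complex}. f (t + (\<Sum>k\<in>insert i K. \<epsilon> k * x k))) =
        (\<Sum>\<epsilon>\<in>K \<rightarrow>\<^sub>E {-1, 1::complex}. f (t + (\<Sum>k\<in>K. \<epsilon> k * x k) + x i) + f (t + (\<Sum>k\<in>K. \<epsilon> k * x k) - x i))"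
        unfolding sum_PiE_insert[OF fK] s' by (intro sum.cong) (simp_all add: algebra_simps)
      then show ?thesis unfolding Bp_def Bm_def by (simp only: sum.distrib)
    qed
    have h3: "(\<Sum>\<epsilon>\<in>K \<rightarrow>\<^sub>E {-1, 1::complex}. (\<lambda>s. 2 * f s - f (s + x i) - f (s - x i)) (t + (\<Sum>k\<in>K. \<epsilon> k * x k)))
       = 2 * A - Bp - Bm"
      unfolding A_def Bp_def Bm_def by (simp add: sum_subtractf sum_distrib_left)
    have c3: "card (insert i K) = Suc (card K)" using fK by simp
    show ?thesis unfolding h2 h3 c1 c2 c3 A_def[symmetric]
      by (simp add: algebra_simps)
  qed
  have "Phi (insert i I) x f t = (\<Sum>K\<in>Pow I. (-1) ^ card K * 2 ^ card (insert i I - K) *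
      (\<Sum>\<epsilon>\<in>K \<rightarrow>\<^sub>E {-1, 1::complex}. f (t + (\<Sum>k\<in>K. \<epsilon> k * x k)))) +
      (\<Sum>K\<in>Pow I. (-1) ^ card (insert i K) * 2 ^ card (insert i I - insert i K) *
      (\<Sum>\<epsilon>\<in>insert i K \<rightarrow>\<^sub>E {-1, 1::complex}. f (t + (\<Sum>k\<in>insert i K. \<epsilon> k * x k))))"
    unfolding Phi_def Pow_insert
    apply (subst sum.union_disjoint)
    using I disj apply simp_all[3]
    apply (subst sum.reindex[OF inj])
    apply (simp only: o_def)
    done
  also have "\<dots> = Phi I x (\<lambda>s. 2 * f s - f (s + x i) - f (s - x i)) t"
    unfolding Phi_def sum.distrib[symmetric] by (rule sum.cong[OF refl], rule eq) simp
  finally show ?thesis .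
qed

lemma Phi_vanish:
  assumes "finite I"
  shows "\<forall>p. degree p < 2 * card I \<longrightarrow> Phi I x (poly p) t = 0"
  using assms
proof (induction I rule: finite_induct)
  case empty then show ?case by simp
next
  case (insert i I)
  show ?case
  proof (intro allI impI)
    fix p :: "complex poly" assume dp: "degree p < 2 * card (insert i I)"
    have f: "(\<lambda>s. 2 * poly p s - poly p (s + x i) - poly p (s - x i)) = poly (Sop (x i) p)"
      by (simp add: poly_Sop fun_eq_iff)
    have "Phi (insert i I) x (poly p) t = Phi I x (poly (Sop (x i) p)) t"
      using insert by (simp add: Phi_insert f)
    also have "\<dots> = 0"
    proof (cases "degree p < 2")
      case True then show ?thesis by (simp add: Sop_zero Phi_def)
    next
      case False
      then have "degree (Sop (x i) p) < 2 * card I"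
        using Sop_deg[of "x i" p] dp insert by simp
      then show ?thesis using insert.IH by blast
    qed
    finally show "Phi (insert i I) x (poly p) t = 0" .
  qed
qed

lemma inner_sum:
  fixes \<alpha> :: "nat \<Rightarrow> complex"
  assumes K: "finite K" "K \<noteq> {}"
  shows "(\<Sum>\<epsilon>\<in>K \<rightarrow>\<^sub>E {-1, 1::complex}. (\<Sum>k\<in>K. \<epsilon> k * \<alpha> k) ^ (2 * r)) =
    2 * (\<Sum>\<epsilon>\<in>(K - {Min K}) \<rightarrow>\<^sub>E {-1, 1::complex}.
                 (\<alpha> (Min K) + (\<Sum>k\<in>K - {Min K}. \<epsilon> k * \<alpha> k)) ^ (2 * r))"
proof -
  define m where "m = Min K"
  define K' where "K' = K - {m}"
  have Kins: "K = insert m K'" using K Min_in unfolding m_def K'_def by blast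
  have fK: "finite K'" "m \<notin> K'" using K unfolding K'_def by auto
  have s: "(\<Sum>k\<in>K'. (\<epsilon>(m := y)) k * \<alpha> k) = (\<Sum>k\<in>K'. \<epsilon> k * \<alpha> k)" for \<epsilon> :: "nat \<Rightarrow> complex" and y
    using fK by (intro sum.cong) auto
  have s': "(\<Sum>k\<in>insert m K'. (\<epsilon>(m := y)) k * \<alpha> k) = y * \<alpha> m + (\<Sum>k\<in>K'. \<epsilon> k * \<alpha> k)" for \<epsilon> :: "nat \<Rightarrow> complex" and y
    using fK s[of \<epsilon> y] by (simp add: sum.insert)
  define neg where "neg = (\<lambda>\<epsilon>::nat \<Rightarrow> complex. restrict (\<lambda>k. - \<epsilon> k) K')"
  have negin: "neg \<epsilon> \<in> K' \<rightarrow>\<^sub>E {-1, 1::complex}" if "\<epsilon> \<in> K' \<rightarrow>\<^sub>E {-1, 1::complex}" for \<epsilon>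
    using that unfolding neg_def by (force simp: PiE_iff)
  have negneg: "neg (neg \<epsilon>) = \<epsilon>" if "\<epsilon> \<in> K' \<rightarrow>\<^sub>E {-1, 1::complex}" for \<epsilon>
    using that unfolding neg_def by (auto simp: fun_eq_iff PiE_def extensional_def)
  have ev: "(-z) ^ (2 * r) = z ^ (2 * r)" for z :: complex by simp
  have "(\<Sum>\<epsilon>\<in>K' \<rightarrow>\<^sub>E {-1, 1::complex}. (- \<alpha> m + (\<Sum>k\<in>K'. \<epsilon> k * \<alpha> k)) ^ (2 * r))
      = (\<Sum>\<epsilon>\<in>K' \<rightarrow>\<^sub>E {-1, 1::complex}. (\<alpha> m + (\<Sum>k\<in>K'. neg \<epsilon> k * \<alpha> k)) ^ (2 * r))"
  proof (rule sum.cong[OF refl])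
    fix \<epsilon> assume "\<epsilon> \<in> K' \<rightarrow>\<^sub>E {-1, 1::complex}"
    have "(\<Sum>k\<in>K'. neg \<epsilon> k * \<alpha> k) = - (\<Sum>k\<in>K'. \<epsilon> k * \<alpha> k)"
      unfolding neg_def by (simp add: sum_negf[symmetric])
    then have "\<alpha> m + (\<Sum>k\<in>K'. neg \<epsilon> k * \<alpha> k) = - (- \<alpha> m + (\<Sum>k\<in>K'. \<epsilon> k * \<alpha> k))" by simp
    then show "(- \<alpha> m + (\<Sum>k\<in>K'. \<epsilon> k * \<alpha> k)) ^ (2 * r) = (\<alpha> m + (\<Sum>k\<in>K'. neg \<epsilon> k * \<alpha> k)) ^ (2 * r)"
      by (simp only: ev)
  qed
  also have "\<dots> = (\<Sum>\<epsilon>\<in>K' \<rightarrow>\<^sub>E {-1, 1::complex}. (\<alpha> m + (\<Sum>k\<in>K'. \<epsilon> k * \<alpha> k)) ^ (2 * r))"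
    by (rule sum.reindex_bij_witness[of _ neg neg]) (auto simp: negin negneg)
  finally have neq: "(\<Sum>\<epsilon>\<in>K' \<rightarrow>\<^sub>E {-1, 1::complex}. (- \<alpha> m + (\<Sum>k\<in>K'. \<epsilon> k * \<alpha> k)) ^ (2 * r)) =
      (\<Sum>\<epsilon>\<in>K' \<rightarrow>\<^sub>E {-1, 1::complex}. (\<alpha> m + (\<Sum>k\<in>K'. \<epsilon> k * \<alpha> k)) ^ (2 * r))" .
  have "(\<Sum>\<epsilon>\<in>K \<rightarrow>\<^sub>E {-1, 1::complex}. (\<Sum>k\<in>K. \<epsilon> k * \<alpha> k) ^ (2 * r)) =
     (\<Sum>\<epsilon>\<in>K' \<rightarrow>\<^sub>E {-1, 1::complex}. (\<alpha> m + (\<Sum>k\<in>K'. \<epsilon> k * \<alpha> k)) ^ (2 * r)) +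
     (\<Sum>\<epsilon>\<in>K' \<rightarrow>\<^sub>E {-1, 1::complex}. (- \<alpha> m + (\<Sum>k\<in>K'. \<epsilon> k * \<alpha> k)) ^ (2 * r))"
    unfolding Kins sum_PiE_insert[OF fK] s' by (simp add: sum.distrib)
  also have "\<dots> = 2 * (\<Sum>\<epsilon>\<in>K' \<rightarrow>\<^sub>E {-1, 1::complex}. (\<alpha> m + (\<Sum>k\<in>K'. \<epsilon> k * \<alpha> k)) ^ (2 * r))"
    unfolding neq by simp
  finally show ?thesis unfolding m_def K'_def .
qed

theorem lemma2:
  fixes q r :: nat and \<alpha> :: "nat \<Rightarrow> complex"
  assumes "q \<ge> 2" and "1 \<le> r" and "r < q"
  shows "(\<Sum>s=1..q. 2 ^ (q - s) * (-1) ^ (s - 1) *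
           (\<Sum>K\<in>{K. K \<subseteq> {1..q} \<and> card K = s}.
              \<Sum>\<epsilon>\<in>(K - {Min K}) \<rightarrow>\<^sub>E {-1, 1::complex}.
                 (\<alpha> (Min K) + (\<Sum>k\<in>K - {Min K}. \<epsilon> k * \<alpha> k)) ^ (2 * r))) = 0"
    (is "?T = 0")
proof -
  define T where "T = (\<lambda>K. \<Sum>\<epsilon>\<in>(K - {Min K}) \<rightarrow>\<^sub>E {-1, 1::complex}.
                 (\<alpha> (Min K) + (\<Sum>k\<in>K - {Min K}. \<epsilon> k * \<alpha> k)) ^ (2 * r))"
  define g where "g = (\<lambda>K. (-1) ^ card K * 2 ^ card ({1..q} - K) *
      (\<Sum>\<epsilon>\<in>K \<rightarrow>\<^sub>E {-1, 1::complex}. (\<lambda>s. s ^ (2 * r)) (0 + (\<Sum>k\<in>K. \<epsilon> k * \<alpha> k))))"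
  have pm: "poly (monom 1 (2 * r)) = (\<lambda>s::complex. s ^ (2 * r))" by (simp add: poly_monom fun_eq_iff)
  have "Phi {1..q} \<alpha> (poly (monom 1 (2 * r))) 0 = 0"
    using Phi_vanish[of "{1..q}" \<alpha> 0] assms by (simp add: degree_monom_eq)
  then have z: "(\<Sum>K\<in>Pow {1..q}. g K) = 0" unfolding pm Phi_def g_def .
  have "(\<Sum>K\<in>Pow {1..q}. g K) = (\<Sum>s\<in>{0..q}. \<Sum>K\<in>{K. K \<in> Pow {1..q} \<and> card K = s}. g K)"
    by (rule sum.group[symmetric]) (auto intro: card_mono[of "{1..q}", simplified])
  also have "\<dots> = (\<Sum>s\<in>{1..q}. \<Sum>K\<in>{K. K \<in> Pow {1..q} \<and> card K = s}. g K)"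
  proof -
    have "{0..q} = insert 0 {1..q}" by auto
    moreover have "{K. K \<in> Pow {1..q} \<and> card K = 0} = {{}}"
      by (auto, metis card_0_eq empty_iff finite_atLeastAtMost finite_subset)
    moreover have "g {} = 0" using assms by (simp add: g_def)
    ultimately show ?thesis by simp
  qed
  also have "\<dots> = (\<Sum>s\<in>{1..q}. \<Sum>K\<in>{K. K \<subseteq> {1..q} \<and> card K = s}. -2 * (2 ^ (q - s) * (-1) ^ (s - 1) * T K))"
  proof (intro sum.cong refl)
    fix s K assume s: "s \<in> {1..q}" and K: "K \<in> {K. K \<subseteq> {1..q} \<and> card K = s}"
    have fK: "finite K" "K \<noteq> {}" "K \<subseteq> {1..q}" "card K = s" using K s finite_subset by auto
    have c: "card ({1..q} - K) = q - s" using fK by (simp add: card_Diff_subset)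
    have "(-1::complex) ^ s = - ((-1) ^ (s - 1))" using s by (cases s) auto
    then show "g K = -2 * (2 ^ (q - s) * (-1) ^ (s - 1) * T K)"
      unfolding g_def T_def c fK(4) using inner_sum[OF fK(1,2), of \<alpha> r] by simp
  qed (auto)
  also have "\<dots> = -2 * ?T"
    by (simp add: sum_distrib_left T_def mult.assoc)
  finally show ?thesis using z by simp
qed

end
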